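(* Let $X$ be a (complete) doubling metric measure space and let $E\subset X$ be a closed set. Then $\overline{\operatorname{co\,dim}}_A(E)$ equals the infimum of all $q\ge0$ for which there exists $C>0$ such that \[\mathcal H^{\mu,q}_R\big(E\cap B(w,R)\big)\ge C\,R^{-q}\mu(B(w,R))\] for every $w\in E$ and all $0<R<\operatorname{diam}(E)$.
   Context: $(X,d,\mu)$ is a complete metric space with a Borel measure $\mu$ such that every closed ball $B(x,r)=\{y:d(x,y)\le r\}$, $r>0$, has $0<\mu(B(x,r))<\infty$, and $\mu$ is doubling. For $E\subset X$ and $r>0$, $E_r=\{x\in X:\operatorname{dist}(x,E)<r\}$. The upper Assouad codimension $\overline{\operatorname{co\,dim}}_A(E)$ is the infimum of all $s\ge0$ for which there is $c>0$ such that $\frac{\mu(E_r\cap B(x,R))}{\mu(B(x,R))}\ge c(r/R)^s$ for every $x\in E$ and all $0<r<R<\operatorname{diam}(E)$. For $q\ge0$ and $R>0$, the Hausdorff content of codimension $q$ is $\mathcal H_R^{\mu,q}(A)=\inf\{\sum_k\operatorname{rad}(B_k)^{-q}\mu(B_k): A\subset\bigcup_k B_k,\ \operatorname{rad}(B_k)\le R\}$, the infimum over countable covers by balls. *)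

theory Defs
  imports "HOL-Analysis.Analysis"
begin

definition doubling_mm :: "'a::metric_space measure \<Rightarrow> bool" where
  "doubling_mm M \<longleftrightarrow>
     sets M = sets borel \<and>
     (\<forall>x r. 0 < r \<longrightarrow> 0 < emeasure M (cball x r) \<and> emeasure M (cball x r) < \<infinity>) \<and>
     (\<exists>C::real. \<forall>x r. 0 < r \<longrightarrow>
        emeasure M (cball x (2 * r)) \<le> ennreal C * emeasure M (cball x r))"

definition ediam :: "'a::metric_space set \<Rightarrow> ereal" where
  "ediam E = (SUP p\<in>E \<times> E. ereal (dist (fst p) (snd p)))"

definition nbhd :: "'a::metric_space set \<Rightarrow> real \<Rightarrow> 'a set" where
  "nbhd E r = {x. infdist x E < r}"

definition upper_assouad_codim :: "'a::metric_space measure \<Rightarrow> 'a set \<Rightarrow> ereal" where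
  "upper_assouad_codim M E = Inf (ereal ` {s::real. 0 \<le> s \<and>
     (\<exists>c>0. \<forall>x\<in>E. \<forall>r R. 0 < r \<and> r < R \<and> ereal R < ediam E \<longrightarrow>
        measure M (nbhd E r \<inter> cball x R) / measure M (cball x R) \<ge> c * (r / R) powr s)})"

definition hcontent :: "'a::metric_space measure \<Rightarrow> real \<Rightarrow> real \<Rightarrow> 'a set \<Rightarrow> ennreal" where
  "hcontent M q R A = Inf {(\<Sum>k. if k \<in> I then ennreal (r k powr (-q)) * emeasure M (cball (c k) (r k)) else 0)
      | (I::nat set) (c::nat \<Rightarrow> 'a) (r::nat \<Rightarrow> real).
        A \<subseteq> (\<Union>k\<in>I. cball (c k) (r k)) \<and> (\<forall>k\<in>I. 0 < r k \<and> r k \<le> R)}"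

end

theory Submission
  imports Defs
begin

lemma final_arith:
  fixes K b P S D4 D dq tq C0 m X Z :: real
  assumes "0<K" "0<b" "0<P" "0 \<le> S" "0 \<le> D4" "D4*dq \<le> K/2" "D4*D*tq = b" "C0 = K/(2*b)"
    "K*m \<le> D4*(X+Z)" "X \<le> S*(dq*P)/C0" "Z \<le> D*(tq*P)*S"
  shows "C0*(1/P)*m \<le> S"
proof -
  have C0: "0 < C0" using assms by simp
  have "D4*X \<le> D4*(S*(dq*P)/C0)" using assms by (intro mult_left_mono) auto
  also have "\<dots> = (D4*dq)*(S*P)*(2*b/K)" unfolding assms(8) using assms by (simp add: field_simps)
  also have "\<dots> \<le> (K/2)*(S*P)*(2*b/K)" using assms by (intro mult_right_mono) auto
  also have "\<dots> = b*P*S" using assms by (simp add: field_simps)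
  finally have 1: "D4*X \<le> b*P*S" .
  have "D4*Z \<le> D4*(D*(tq*P)*S)" using assms by (intro mult_left_mono) auto
  also have "\<dots> = b*P*S" using assms(7) by (simp add: field_simps)
  finally have 2: "D4*Z \<le> b*P*S" .
  have "K*m \<le> 2*b*P*S" using 1 2 assms(9) by (simp add: algebra_simps)
  hence "m \<le> 2*b*P*S/K" using assms(1) by (simp add: pos_le_divide_eq mult.commute)
  hence "C0*m \<le> C0*(2*b*P*S/K)" using C0 by (intro mult_left_mono) auto
  also have "\<dots> = P*S" unfolding assms(8) using assms by (simp add: field_simps)
  finally have f: "C0*m \<le> P*S" .
  have "C0*(1/P)*m = (C0*m)/P" by simp
  also have "\<dots> \<le> S" using f assms(3) by (simp add: pos_divide_le_eq mult.commute)
  finally show ?thesis .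
qed

lemma delta_ex:
  fixes c s q D :: real
  assumes "0<c" "s < q" "1 \<le> D" "0 \<le> s"
  shows "\<exists>\<delta>>0. \<delta> \<le> 1/8 \<and> D^4 * \<delta> powr q \<le> (c*(4*\<delta>) powr s / D^2)/2"
proof -
  define e where "e = (c/(2*D^6)) powr (1/(q-s))"
  define \<delta> where "\<delta> = min (1/8) e"
  have e: "0 < e" using assms by (simp add: e_def)
  have d: "0 < \<delta>" "\<delta> \<le> 1/8" "\<delta> \<le> e" using e by (auto simp: \<delta>_def)
  have "\<delta> powr (q-s) \<le> e powr (q-s)" using d assms by (intro powr_mono2) auto
  also have "\<dots> = c/(2*D^6)" using assms unfolding e_def by (simp add: powr_powr)
  finally have d1: "\<delta> powr (q-s) \<le> c/(2*D^6)" .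
  have "\<delta> powr q = \<delta> powr s * \<delta> powr (q-s)" using d by (simp add: powr_add[symmetric])
  hence "D^4 * \<delta> powr q = (D^4 * \<delta> powr s) * \<delta> powr (q-s)" by simp
  also have "\<dots> \<le> (D^4 * \<delta> powr s) * (c/(2*D^6))"
    using d1 d assms by (intro mult_left_mono) auto
  also have "\<dots> = D^4 * (\<delta> powr s * (c/(2*D^6)))" by simp
  also have "\<dots> = (c * \<delta> powr s / D^2)/2" using assms by (simp add: field_simps power_add[symmetric] eval_nat_numeral)
  also have "\<dots> \<le> (c * (4 powr s * \<delta> powr s) / D^2)/2"
    using assms d by (intro divide_right_mono mult_left_mono) (auto simp: ge_one_powr_ge_zero)
  also have "\<dots> = (c*(4*\<delta>) powr s / D^2)/2" using d by (simp add: powr_mult)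
  finally show ?thesis using d by blast
qed

lemma t2_arith: fixes a b t :: real assumes "0<a" "0<b" "0<t"
  shows "1 / (a / (t * t)) * ((a / b) / t) = t / b"
  using assms by (simp add: field_simps)

lemma fin_arith:
  fixes m D t C P T :: real
  shows "0<m \<Longrightarrow> 0<D \<Longrightarrow> 0<t \<Longrightarrow> C*(P/t)*m \<le> D*T \<Longrightarrow> C/(D*t)*P \<le> T/m"
  by (simp add: field_simps)

locale dmm =
  fixes M :: "'a::complete_space measure"
  assumes dm: "doubling_mm M"
begin

lemma setsM: "sets M = sets borel"
  using dm unfolding doubling_mm_def by blast

lemma borelM: "A \<in> sets borel \<Longrightarrow> A \<in> sets M"
  using setsM by simp

lemma cball_sets[simp]: "cball x r \<in> sets M"
  by (rule borelM) simp

lemma cball_fin: "cball x r \<in> fmeasurable M"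
proof -
  have "cball x r \<subseteq> cball x (max r 1)" by auto
  hence "emeasure M (cball x r) \<le> emeasure M (cball x (max r 1))"
    by (intro emeasure_mono) auto
  also have "\<dots> < \<infinity>" using dm unfolding doubling_mm_def by auto
  finally show ?thesis by (auto simp: fmeasurable_def)
qed

lemma emeasure_cball: "emeasure M (cball x r) = ennreal (measure M (cball x r))"
  using cball_fin by (simp add: emeasure_eq_measure2)

lemma mpos: "0 < r \<Longrightarrow> 0 < measure M (cball x r)"
proof -
  assume "0 < r"
  hence "0 < emeasure M (cball x r)" using dm unfolding doubling_mm_def by auto
  thus ?thesis by (simp add: emeasure_cball)
qed

lemma mmono: "A \<in> sets borel \<Longrightarrow> A \<subseteq> cball x r \<Longrightarrow> measure M A \<le> measure M (cball x r)"
  by (rule measure_mono_fmeasurable) (auto simp: borelM cball_fin)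

lemma dbl_ex: "\<exists>D\<ge>1. \<forall>x r. 0 < r \<longrightarrow> measure M (cball x (2*r)) \<le> D * measure M (cball x r)"
proof -
  obtain C :: real where C: "\<And>x r. 0 < r \<Longrightarrow> emeasure M (cball x (2 * r)) \<le> ennreal C * emeasure M (cball x r)"
    using dm unfolding doubling_mm_def by blast
  have "\<forall>x r. 0 < r \<longrightarrow> measure M (cball x (2*r)) \<le> max 1 C * measure M (cball x r)"
  proof (intro allI impI)
    fix x :: 'a and r :: real assume r: "0 < r"
    have p1: "0 < measure M (cball x (2*r))" using r mpos by simp
    have p2: "0 < measure M (cball x r)" using r mpos by simp
    have e: "ennreal (measure M (cball x (2*r))) \<le> ennreal C * ennreal (measure M (cball x r))"
      using C[OF r] by (simp add: emeasure_cball)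
    show "measure M (cball x (2*r)) \<le> max 1 C * measure M (cball x r)"
    proof (cases "C \<le> 0")
      case True
      hence "ennreal C = 0" by (simp add: ennreal_eq_0_iff)
      with e p1 show ?thesis by simp
    next
      case False
      with e have "measure M (cball x (2*r)) \<le> C * measure M (cball x r)"
        using p2 by (simp add: ennreal_mult''[symmetric] ennreal_le_iff)
      also have "\<dots> \<le> max 1 C * measure M (cball x r)"
        using p2 by (intro mult_right_mono) auto
      finally show ?thesis .
    qed
  qed
  thus ?thesis by (intro exI[of _ "max 1 C"]) auto
qed

definition "Dc = (SOME D. D \<ge> 1 \<and> (\<forall>x r. 0 < r \<longrightarrow> measure M (cball x (2*r)) \<le> D * measure M (cball x r)))"

lemma Dc: "Dc \<ge> 1" "\<And>x r. 0 < r \<Longrightarrow> measure M (cball x (2*r)) \<le> Dc * measure M (cball x r)"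
  using someI_ex[OF dbl_ex] unfolding Dc_def by auto

lemma dbl_iter: "0 < r \<Longrightarrow> measure M (cball x (2^n*r)) \<le> Dc^n * measure M (cball x r)"
proof (induction n)
  case 0 thus ?case by simp
next
  case (Suc n)
  have "measure M (cball x (2^Suc n*r)) = measure M (cball x (2*(2^n*r)))" by (simp add: mult.assoc)
  also have "\<dots> \<le> Dc * measure M (cball x (2^n*r))" using Dc(2) Suc.prems by simp
  also have "\<dots> \<le> Dc * (Dc^n * measure M (cball x r))"
    using Suc Dc(1) by (intro mult_left_mono) auto
  finally show ?case by (simp add: mult.assoc)
qed

lemma dbl_cmp: "0 < r \<Longrightarrow> cball y R \<subseteq> cball x (2^n*r) \<Longrightarrow>
   measure M (cball y R) \<le> Dc^n * measure M (cball x r)"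
  using mmono[of "cball y R" x "2^n*r"] dbl_iter[of r x n] by simp

lemma disj_sum:
  assumes "finite Y" "\<And>y. y\<in>Y \<Longrightarrow> B y \<in> sets M" "\<And>y. y\<in>Y \<Longrightarrow> B y \<subseteq> T"
    "T \<in> fmeasurable M" "disjoint_family_on B Y"
  shows "(\<Sum>y\<in>Y. measure M (B y)) \<le> measure M T"
proof -
  have fin: "emeasure M (B y) \<noteq> \<infinity>" if "y \<in> Y" for y
  proof -
    have "emeasure M (B y) \<le> emeasure M T" using assms that by (intro emeasure_mono) auto
    also have "\<dots> < \<infinity>" using assms(4) by (auto simp: fmeasurable_def)
    finally show ?thesis by simp
  qed
  have "(\<Sum>y\<in>Y. measure M (B y)) = measure M (\<Union>y\<in>Y. B y)"
    using assms fin by (intro measure_finite_Union[symmetric]) auto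
  also have "\<dots> \<le> measure M T"
    using assms by (intro measure_mono_fmeasurable) auto
  finally show ?thesis .
qed

definition "sep (e::real) Y \<longleftrightarrow> (\<forall>y\<in>Y. \<forall>y'\<in>Y. y \<noteq> y' \<longrightarrow> e \<le> dist y y')"

lemma sep_disj: "sep e Y \<Longrightarrow> 2*t < e \<Longrightarrow> disjoint_family_on (\<lambda>y. cball y t) Y"
  unfolding sep_def disjoint_family_on_def
proof (intro ballI impI)
  fix y y' assume s: "\<forall>y\<in>Y. \<forall>y'\<in>Y. y \<noteq> y' \<longrightarrow> e \<le> dist y y'" and t: "2*t < e"
    and y: "y \<in> Y" "y' \<in> Y" "y \<noteq> y'"
  show "cball y t \<inter> cball y' t = {}"
  proof (rule ccontr)
    assume "cball y t \<inter> cball y' t \<noteq> {}"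
    then obtain z where "dist y z \<le> t" "dist y' z \<le> t" by auto
    moreover have "dist y y' \<le> dist y z + dist z y'" by (rule dist_triangle)
    moreover have "dist z y' = dist y' z" by (rule dist_commute)
    ultimately have "dist y y' \<le> 2*t" by linarith
    with s y t show False by force
  qed
qed

lemma card_bound:
  fixes x :: 'a
  assumes "A \<subseteq> cball x R0" "0 < e" "0 \<le> R0"
  shows "\<exists>N::nat. \<forall>Y. finite Y \<and> Y \<subseteq> A \<and> sep e Y \<longrightarrow> card Y \<le> N"
proof -
  define t where "t = e/3"
  have t: "0 < t" using assms by (simp add: t_def)
  obtain n where n: "(2*R0+e)/t < 2^n" using real_arch_pow[of 2 "(2*R0+e)/t"] by auto
  hence n': "2*R0+e \<le> 2^n*t" using t by (simp add: field_simps)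
  define mX where "mX = measure M (cball x (R0+e))"
  have mX: "0 < mX" unfolding mX_def using assms by (intro mpos) auto
  have "real (card Y) \<le> Dc^n" if Y: "finite Y" "Y \<subseteq> A" "sep e Y" for Y
  proof -
    have lb: "mX \<le> Dc^n * measure M (cball y t)" if "y \<in> Y" for y
    proof -
      have "dist x y \<le> R0" using that Y assms by auto
      have "cball x (R0+e) \<subseteq> cball y (2^n*t)"
      proof
        fix z assume "z \<in> cball x (R0+e)"
        hence "dist x z \<le> R0 + e" by simp
        moreover have "dist y z \<le> dist y x + dist x z" by (rule dist_triangle)
        moreover have "dist y x = dist x y" by (rule dist_commute)
        ultimately show "z \<in> cball y (2^n*t)" using n' \<open>dist x y \<le> R0\<close> by simp
      qed
      thus ?thesis unfolding mX_def by (intro dbl_cmp t)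
    qed
    have d: "disjoint_family_on (\<lambda>y. cball y t) Y" using Y(3) t by (intro sep_disj[of e]) (auto simp: t_def)
    have sub: "cball y t \<subseteq> cball x (R0 + e)" if "y \<in> Y" for y
    proof
      have xy: "dist x y \<le> R0" using that Y assms by auto
      fix z assume "z \<in> cball y t"
      hence "dist y z \<le> t" by simp
      moreover have "dist x z \<le> dist x y + dist y z" by (rule dist_triangle)
      ultimately show "z \<in> cball x (R0 + e)" using xy t by (simp add: t_def)
    qed
    have "(\<Sum>y\<in>Y. measure M (cball y t)) \<le> mX"
      unfolding mX_def by (rule disj_sum[of Y "\<lambda>y. cball y t", OF Y(1) _ sub cball_fin d]) simp
    moreover have "(\<Sum>y\<in>Y. mX / Dc^n) \<le> (\<Sum>y\<in>Y. measure M (cball y t))"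
    proof (rule sum_mono)
      fix y assume yY: "y \<in> Y"
      have "0 < Dc^n" using Dc(1) by simp
      thus "mX / Dc^n \<le> measure M (cball y t)" using lb[OF yY] by (simp add: pos_divide_le_eq mult.commute)
    qed
    moreover have "(\<Sum>y\<in>Y. mX / Dc^n) = real (card Y) * (mX / Dc^n)" by simp
    ultimately have "real (card Y) * (mX / Dc^n) \<le> mX" by linarith
    hence "(real (card Y) * mX) / Dc^n \<le> mX" by simp
    moreover have "0 < Dc^n" using Dc(1) by simp
    ultimately have "real (card Y) * mX \<le> Dc^n * mX" by (simp add: pos_divide_le_eq mult.commute)
    thus ?thesis using mX by simp
  qed
  note cardle = this
  show ?thesis
  proof (intro exI[of _ "nat \<lceil>Dc^n\<rceil>"] allI impI)
    fix Y assume "finite Y \<and> Y \<subseteq> A \<and> sep e Y"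
    hence "real (card Y) \<le> Dc^n" using cardle by blast
    also have "\<dots> \<le> real (nat \<lceil>Dc^n\<rceil>)" by linarith
    finally show "card Y \<le> nat \<lceil>Dc^n\<rceil>" by (simp only: of_nat_le_iff)
  qed
qed

lemma net:
  fixes x :: 'a
  assumes "A \<subseteq> cball x R0" "0 < e" "0 \<le> R0"
  shows "\<exists>Y. finite Y \<and> Y \<subseteq> A \<and> sep e Y \<and> (\<forall>a\<in>A. \<exists>y\<in>Y. dist a y < e)"
proof -
  obtain N where N: "\<And>Y. finite Y \<Longrightarrow> Y \<subseteq> A \<Longrightarrow> sep e Y \<Longrightarrow> card Y \<le> N"
    using card_bound[OF assms] by blast
  define S where "S = {card Y | Y. finite Y \<and> Y \<subseteq> A \<and> sep e Y}"
  have "S \<subseteq> {..N}" unfolding S_def using N by auto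
  hence Sfin: "finite S" using finite_subset by blast
  have "card {} \<in> S" unfolding S_def sep_def by (intro CollectI exI[of _ "{}"]) simp
  hence "0 \<in> S" by simp
  hence "Max S \<in> S" using Sfin by (intro Max_in) auto
  then obtain Y where Y: "finite Y" "Y \<subseteq> A" "sep e Y" "card Y = Max S" unfolding S_def by auto
  have "\<exists>y\<in>Y. dist a y < e" if a: "a \<in> A" for a
  proof (rule ccontr)
    assume "\<not> ?thesis"
    hence far: "\<forall>y\<in>Y. e \<le> dist a y" by auto
    hence aY: "a \<notin> Y" using assms(2) by force
    have "sep e (insert a Y)" using Y(3) far unfolding sep_def by (auto simp: dist_commute)
    hence "card (insert a Y) \<in> S" unfolding S_def using Y a by blast
    hence "card (insert a Y) \<le> Max S" using Sfin by simp
    thus False using Y aY by simp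
  qed
  thus ?thesis using Y by blast
qed

lemma compact_part:
  fixes E :: "'a set"
  assumes "closed E"
  shows "compact (E \<inter> cball w R)"
proof (cases "R < 0")
  case True thus ?thesis by simp
next
  case False
  show ?thesis unfolding compact_eq_totally_bounded
  proof (intro conjI allI impI)
    show "complete (E \<inter> cball w R)" using assms by (simp add: complete_eq_closed closed_Int)
    fix e :: real assume e: "0 < e"
    obtain Y where Y: "finite Y" "Y \<subseteq> E \<inter> cball w R" "\<forall>a\<in>E \<inter> cball w R. \<exists>y\<in>Y. dist a y < e"
      using net[of "E \<inter> cball w R" w R e] e False by auto
    thus "\<exists>k. finite k \<and> E \<inter> cball w R \<subseteq> (\<Union>x\<in>k. ball x e)"
      by (intro exI[of _ Y]) (auto simp: dist_commute)
  qed
qed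

lemma nbhd_sets: "nbhd E r \<in> sets M"
proof -
  have "open (nbhd E r)" unfolding nbhd_def
    by (intro open_Collect_less continuous_on_infdist continuous_on_const) simp
  thus ?thesis by (intro borelM) simp
qed

lemma nbhd_fin: "nbhd E r \<inter> cball x R \<in> fmeasurable M"
  by (rule fmeasurableI2[OF cball_fin[of x R]]) (auto intro: nbhd_sets)

lemma hcontent_le_fin:
  assumes "finite Y" "0 < \<rho>" "\<rho> \<le> R" "A \<subseteq> (\<Union>y\<in>Y. cball y \<rho>)"
  shows "hcontent M q R A \<le> ennreal (\<Sum>y\<in>Y. \<rho> powr (-q) * measure M (cball y \<rho>))"
proof -
  obtain h where h: "bij_betw h {0..<card Y} Y" using ex_bij_betw_nat_finite[OF assms(1)] by blast
  define I where "I = {0..<card Y}"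
  define f where "f = (\<lambda>k. if k \<in> I then ennreal (((\<lambda>_. \<rho>) k) powr (-q)) * emeasure M (cball (h k) ((\<lambda>_. \<rho>) k)) else 0)"
  have cov: "A \<subseteq> (\<Union>k\<in>I. cball (h k) ((\<lambda>_. \<rho>) k))"
  proof
    fix a assume "a \<in> A"
    then obtain y where y: "y \<in> Y" "a \<in> cball y \<rho>" using assms(4) by blast
    have "h ` I = Y" using h unfolding I_def by (rule bij_betw_imp_surj_on)
    with y(1) obtain k where "k \<in> I" "h k = y" by (metis imageE)
    thus "a \<in> (\<Union>k\<in>I. cball (h k) ((\<lambda>_. \<rho>) k))" using y by blast
  qed
  have rad: "\<forall>k\<in>I. 0 < (\<lambda>_. \<rho>) k \<and> (\<lambda>_. \<rho>) k \<le> R" using assms by simp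
  have "suminf f \<in> {(\<Sum>k. if k \<in> I then ennreal (r k powr (-q)) * emeasure M (cball (c k) (r k)) else 0)
      | (I::nat set) (c::nat \<Rightarrow> 'a) (r::nat \<Rightarrow> real).
        A \<subseteq> (\<Union>k\<in>I. cball (c k) (r k)) \<and> (\<forall>k\<in>I. 0 < r k \<and> r k \<le> R)}"
    apply (rule CollectI)
    apply (rule exI[of _ I], rule exI[of _ h], rule exI[of _ "\<lambda>_. \<rho>"])
    using cov rad by (simp add: f_def)
  hence "hcontent M q R A \<le> suminf f" unfolding hcontent_def by (rule Inf_lower)
  also have "suminf f = (\<Sum>k\<in>I. f k)" by (rule suminf_finite) (auto simp: f_def I_def)
  also have "\<dots> = (\<Sum>k\<in>I. ennreal (\<rho> powr (-q) * measure M (cball (h k) \<rho>)))"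
    unfolding f_def by (intro sum.cong) (auto simp: emeasure_cball ennreal_mult)
  also have "\<dots> = ennreal (\<Sum>k\<in>I. \<rho> powr (-q) * measure M (cball (h k) \<rho>))"
    by (intro sum_ennreal) (auto intro!: measure_nonneg)
  also have "(\<Sum>k\<in>I. \<rho> powr (-q) * measure M (cball (h k) \<rho>)) = (\<Sum>y\<in>Y. \<rho> powr (-q) * measure M (cball y \<rho>))"
    unfolding I_def by (rule sum.reindex_bij_betw[OF h])
  finally show ?thesis .
qed

lemma dir_b:
  fixes E :: "'a set"
  assumes q: "0 \<le> q" and C: "0 < C"
    and H: "\<forall>w\<in>E. \<forall>R. 0 < R \<and> ereal R < ediam E \<longrightarrow>
        ennreal (C * R powr (-q) * measure M (cball w R)) \<le> hcontent M q R (E \<inter> cball w R)"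
  shows "\<exists>c>0. \<forall>x\<in>E. \<forall>r R. 0 < r \<and> r < R \<and> ereal R < ediam E \<longrightarrow>
        measure M (nbhd E r \<inter> cball x R) / measure M (cball x R) \<ge> c * (r / R) powr q"
proof (intro exI[of _ "C / (Dc^3 * 2 powr q)"] conjI ballI allI impI)
  show "0 < C / (Dc^3 * 2 powr q)" using C Dc(1) by simp
  fix x r R assume x: "x \<in> E" and rR: "0 < r \<and> r < R \<and> ereal R < ediam E"
  define \<rho> where "\<rho> = r/4"
  define R2 where "R2 = R/2"
  define T where "T = measure M (nbhd E r \<inter> cball x R)"
  have \<rho>: "0 < \<rho>" "\<rho> \<le> R2" using rR by (auto simp: \<rho>_def R2_def)
  have "ereal R2 < ereal R" using rR by (simp add: R2_def)
  hence R2: "0 < R2" "ereal R2 < ediam E" using rR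
     apply (simp add: R2_def) using \<open>ereal R2 < ereal R\<close> rR order.strict_trans by blast
  obtain Y where Y: "finite Y" "Y \<subseteq> E \<inter> cball x R2" "sep \<rho> Y" "\<forall>a\<in>E \<inter> cball x R2. \<exists>y\<in>Y. dist a y < \<rho>"
    using net[of "E \<inter> cball x R2" x R2 \<rho>] \<rho> R2 by auto
  have cov: "E \<inter> cball x R2 \<subseteq> (\<Union>y\<in>Y. cball y \<rho>)"
  proof
    fix a assume "a \<in> E \<inter> cball x R2"
    then obtain y where "y \<in> Y" "dist a y < \<rho>" using Y(4) by blast
    hence "y \<in> Y" "a \<in> cball y \<rho>" by (auto simp: dist_commute)
    thus "a \<in> (\<Union>y\<in>Y. cball y \<rho>)" by blast
  qed
  have "ennreal (C * R2 powr (-q) * measure M (cball x R2)) \<le> hcontent M q R2 (E \<inter> cball x R2)"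
    using H x R2 by blast
  also have "\<dots> \<le> ennreal (\<Sum>y\<in>Y. \<rho> powr (-q) * measure M (cball y \<rho>))"
    by (rule hcontent_le_fin[OF Y(1) \<rho> cov])
  finally have h1: "C * R2 powr (-q) * measure M (cball x R2) \<le> (\<Sum>y\<in>Y. \<rho> powr (-q) * measure M (cball y \<rho>))"
    by (subst (asm) ennreal_le_iff) (auto intro!: sum_nonneg)
  have h2: "measure M (cball y \<rho>) \<le> Dc^2 * measure M (cball y (\<rho>/3))" for y
    using \<rho> by (intro dbl_cmp) auto
  have d: "disjoint_family_on (\<lambda>y. cball y (\<rho>/3)) Y" using Y(3) \<rho> by (intro sep_disj[of \<rho>]) auto
  have sub: "cball y (\<rho>/3) \<subseteq> nbhd E r \<inter> cball x R" if "y \<in> Y" for y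
  proof
    fix z assume z: "z \<in> cball y (\<rho>/3)"
    have yE: "y \<in> E" and xy: "dist x y \<le> R2" using that Y(2) by auto
    have "infdist z E \<le> dist z y" by (rule infdist_le[OF yE])
    also have "\<dots> < r" using z \<rho> by (simp add: dist_commute \<rho>_def)
    finally have "z \<in> nbhd E r" by (simp add: nbhd_def)
    moreover have "dist x z \<le> dist x y + dist y z" by (rule dist_triangle)
    ultimately show "z \<in> nbhd E r \<inter> cball x R" using xy z \<rho> rR by (simp add: R2_def \<rho>_def)
  qed
  have h3: "(\<Sum>y\<in>Y. measure M (cball y (\<rho>/3))) \<le> T"
    unfolding T_def by (rule disj_sum[of Y "\<lambda>y. cball y (\<rho>/3)", OF Y(1) _ sub nbhd_fin d]) simp
  have "(\<Sum>y\<in>Y. \<rho> powr (-q) * measure M (cball y \<rho>)) \<le> (\<Sum>y\<in>Y. \<rho> powr (-q) * (Dc^2 * measure M (cball y (\<rho>/3))))"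
    using h2 by (intro sum_mono mult_left_mono) auto
  also have "\<dots> = \<rho> powr (-q) * Dc^2 * (\<Sum>y\<in>Y. measure M (cball y (\<rho>/3)))"
    by (simp add: sum_distrib_left mult.assoc)
  also have "\<dots> \<le> \<rho> powr (-q) * Dc^2 * T"
    using h3 Dc(1) by (intro mult_left_mono) auto
  finally have h4: "C * R2 powr (-q) * measure M (cball x R2) \<le> \<rho> powr (-q) * Dc^2 * T" using h1 by linarith
  define P where "P = (r/R) powr q"
  have id: "R2 powr (-q) = \<rho> powr (-q) * (P / 2 powr q)"
  proof -
    have four: "(4::real) powr q = 2 powr q * 2 powr q" using powr_mult[of 2 2 q] by simp
    have pos: "0 < r powr q" "0 < R powr q" "0 < (2::real) powr q" using rR by auto
    have "R2 powr (-q) = 2 powr q / R powr q" unfolding R2_def by (simp add: powr_minus_divide powr_divide)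
    moreover have "\<rho> powr (-q) * (P / 2 powr q) = 1 / (r powr q / (2 powr q * 2 powr q)) * ((r powr q / R powr q) / 2 powr q)"
      unfolding \<rho>_def P_def by (simp add: powr_minus_divide powr_divide four)
    moreover have "1 / (r powr q / (2 powr q * 2 powr q)) * ((r powr q / R powr q) / 2 powr q) = 2 powr q / R powr q"
      using pos by (rule t2_arith)
    ultimately show ?thesis by simp
  qed
  have "\<rho> powr (-q) * (C * (P / 2 powr q) * measure M (cball x R2)) \<le> \<rho> powr (-q) * (Dc^2 * T)"
  proof -
    have "C * R2 powr (-q) * measure M (cball x R2) = \<rho> powr (-q) * (C * (P / 2 powr q) * measure M (cball x R2))"
      unfolding id by (simp only: mult_ac)
    moreover have "\<rho> powr (-q) * Dc^2 * T = \<rho> powr (-q) * (Dc^2 * T)" by (simp only: mult_ac)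
    ultimately show ?thesis using h4 by simp
  qed
  hence h5: "C * (P / 2 powr q) * measure M (cball x R2) \<le> Dc^2 * T"
    using \<rho> by (subst (asm) mult_le_cancel_left_pos) auto
  have h6: "measure M (cball x R) \<le> Dc * measure M (cball x R2)"
    using Dc(2)[of R2 x] R2 by (simp add: R2_def)
  have "C * (P / 2 powr q) * measure M (cball x R) \<le> C * (P / 2 powr q) * (Dc * measure M (cball x R2))"
    using h6 C by (intro mult_left_mono) (auto simp: P_def)
  also have "\<dots> = Dc * (C * (P / 2 powr q) * measure M (cball x R2))" by simp
  also have "\<dots> \<le> Dc * (Dc^2 * T)" using h5 Dc(1) by (intro mult_left_mono) auto
  also have "Dc * (Dc^2 * T) = Dc^3 * T" by (simp add: power3_eq_cube power2_eq_square)
  finally have h7: "C * (P / 2 powr q) * measure M (cball x R) \<le> Dc^3 * T" .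
  have mR: "0 < measure M (cball x R)" using rR by (intro mpos) auto
  show "C / (Dc^3 * 2 powr q) * (r / R) powr q \<le> T / measure M (cball x R)"
    unfolding P_def[symmetric] using h7 mR Dc(1) by (intro fin_arith) auto
qed

lemma fin_UN_cball: "finite I \<Longrightarrow> (\<Union>i\<in>I. cball (f i) (g i)) \<in> fmeasurable M"
  by (rule fmeasurable.finite_UN) (auto simp: cball_fin)

definition "Ssum q F cen rad = (\<Sum>k\<in>F. rad k powr (-q) * measure M (cball (cen k) (rad k)))"

definition "Pc q E C0 rmin \<rho> \<longleftrightarrow> (\<forall>y\<in>E. \<forall>(F::nat set) cen rad. finite F \<longrightarrow>
   (\<forall>k\<in>F. rmin \<le> rad k \<and> rad k \<le> 2*\<rho>) \<longrightarrow> E \<inter> cball y \<rho> \<subseteq> (\<Union>k\<in>F. cball (cen k) (rad k)) \<longrightarrow>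
   C0 * \<rho> powr (-q) * measure M (cball y \<rho>) \<le> Ssum q F cen rad)"

lemma Ssum_nonneg: "(\<forall>k\<in>F. 0 < rad k) \<Longrightarrow> 0 \<le> Ssum q F cen rad"
  unfolding Ssum_def by (intro sum_nonneg) auto

lemma step:
  fixes E :: "'a set"
  assumes AS: "\<And>x r R. x\<in>E \<Longrightarrow> 0<r \<Longrightarrow> r<R \<Longrightarrow> ereal R < ediam E \<Longrightarrow>
        c*(r/R) powr s * measure M (cball x R) \<le> measure M (nbhd E r \<inter> cball x R)"
    and c: "0 < c" and q: "0 \<le> q" and \<delta>: "0 < \<delta>" "\<delta> \<le> 1/8"
    and K: "K = c*(4*\<delta>) powr s / Dc^2" and \<alpha>: "Dc^4 * \<delta> powr q \<le> K/2"
    and C0: "C0 = K/(2*(Dc^5 * 2 powr q))" and rmin: "0 < rmin"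
    and \<rho>: "0 < \<rho>" "ereal \<rho> < ediam E" and IH: "Pc q E C0 rmin (\<delta>*\<rho>)"
  shows "Pc q E C0 rmin \<rho>"
  unfolding Pc_def
proof (intro ballI allI impI)
  fix y F cen rad
  assume y: "y \<in> E" and Ffin: "finite (F::nat set)" and rads: "\<forall>k\<in>F. rmin \<le> rad k \<and> rad k \<le> 2*\<rho>"
    and cov: "E \<inter> cball y \<rho> \<subseteq> (\<Union>k\<in>F. cball (cen k) (rad k))"
  define d where "d = \<delta>*\<rho>"
  have d: "0 < d" "d \<le> \<rho>/8" using \<delta> \<rho> by (auto simp: d_def)
  define S where "S = Ssum q F cen rad"
  have radpos: "\<forall>k\<in>F. 0 < rad k" using rads rmin by force
  have S0: "0 \<le> S" unfolding S_def using radpos by (rule Ssum_nonneg)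
  have Kpos: "0 < K" unfolding K using c \<delta> Dc(1) by simp
  have Dc0: "0 < Dc" using Dc(1) by simp
  obtain Y where Y: "finite Y" "Y \<subseteq> E \<inter> cball y (\<rho>/2)" "sep (11*d) Y"
      "\<forall>a\<in>E \<inter> cball y (\<rho>/2). \<exists>z\<in>Y. dist a z < 11*d"
    using net[of "E \<inter> cball y (\<rho>/2)" y "\<rho>/2" "11*d"] d \<rho> by auto
  have sub1: "nbhd E d \<inter> cball y (\<rho>/4) \<subseteq> (\<Union>z\<in>Y. cball z (12*d))"
  proof
    fix p assume p: "p \<in> nbhd E d \<inter> cball y (\<rho>/4)"
    have "E \<noteq> {}" using y by blast
    moreover have "infdist p E < d" using p by (simp add: nbhd_def)
    ultimately obtain e where e: "e \<in> E" "dist p e < d" by (auto simp: infdist_notempty cINF_less_iff)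
    have "dist y e \<le> dist y p + dist p e" by (rule dist_triangle)
    hence "dist y e \<le> \<rho>/2" using p e d by simp
    hence "e \<in> E \<inter> cball y (\<rho>/2)" using e by simp
    then obtain z where z: "z \<in> Y" "dist e z < 11*d" using Y(4) by blast
    have "dist z p \<le> dist z e + dist e p" by (rule dist_triangle)
    hence "dist z p \<le> 12*d" using z e by (simp add: dist_commute)
    thus "p \<in> (\<Union>z\<in>Y. cball z (12*d))" using z by auto
  qed
  have i1: "measure M (nbhd E d \<inter> cball y (\<rho>/4)) \<le> (\<Sum>z\<in>Y. measure M (cball z (12*d)))"
  proof -
    have "measure M (nbhd E d \<inter> cball y (\<rho>/4)) \<le> measure M (\<Union>z\<in>Y. cball z (12*d))"
      by (rule measure_mono_fmeasurable[OF sub1]) (auto intro: nbhd_sets fin_UN_cball Y(1))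
    also have "\<dots> \<le> (\<Sum>z\<in>Y. measure M (cball z (12*d)))"
      by (rule measure_UNION_le[OF Y(1)]) simp
    finally show ?thesis .
  qed
  have i2: "c*(d/(\<rho>/4)) powr s * measure M (cball y (\<rho>/4)) \<le> measure M (nbhd E d \<inter> cball y (\<rho>/4))"
  proof (rule AS[OF y d(1)])
    show "d < \<rho>/4" using d \<rho> by simp
    have "ereal (\<rho>/4) < ereal \<rho>" using \<rho> by simp
    thus "ereal (\<rho>/4) < ediam E" using \<rho>(2) by (rule order.strict_trans)
  qed
  have dd: "d/(\<rho>/4) = 4*\<delta>" using \<rho> by (simp add: d_def)
  have i3: "measure M (cball y \<rho>) \<le> Dc^2 * measure M (cball y (\<rho>/4))"
    using \<rho> by (intro dbl_cmp) auto
  have I: "K * measure M (cball y \<rho>) \<le> (\<Sum>z\<in>Y. measure M (cball z (12*d)))"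
  proof -
    have "K * measure M (cball y \<rho>) \<le> K * (Dc^2 * measure M (cball y (\<rho>/4)))"
      using i3 Kpos by (intro mult_left_mono) auto
    also have "\<dots> = c*(4*\<delta>) powr s * measure M (cball y (\<rho>/4))" unfolding K using Dc0 by simp
    also have "\<dots> \<le> measure M (nbhd E d \<inter> cball y (\<rho>/4))" using i2 dd by simp
    finally show ?thesis using i1 by linarith
  qed
  define Fb where "Fb = {k\<in>F. 2*d < rad k}"
  define Ys where "Ys = {z\<in>Y. \<forall>k\<in>Fb. cball (cen k) (rad k) \<inter> E \<inter> cball z d = {}}"
  define Yb where "Yb = Y - Ys"
  define Fz where "Fz = (\<lambda>z. {k\<in>F. rad k \<le> 2*d \<and> cball (cen k) (rad k) \<inter> E \<inter> cball z d \<noteq> {}})"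
  have m12: "measure M (cball z (12*d)) \<le> Dc^4 * measure M (cball z d)" for z
    using d by (intro dbl_cmp) auto
  have small: "C0 * d powr (-q) * measure M (cball z d) \<le> Ssum q (Fz z) cen rad" if z: "z \<in> Ys" for z
  proof -
    have zY: "z \<in> Y" using z by (simp add: Ys_def)
    hence zE: "z \<in> E" and yz: "dist y z \<le> \<rho>/2" using Y(2) by auto
    have "E \<inter> cball z d \<subseteq> (\<Union>k\<in>Fz z. cball (cen k) (rad k))"
    proof
      fix p assume p: "p \<in> E \<inter> cball z d"
      have "dist y p \<le> dist y z + dist z p" by (rule dist_triangle)
      hence "p \<in> E \<inter> cball y \<rho>" using p yz d by simp
      then obtain k where k: "k \<in> F" "p \<in> cball (cen k) (rad k)" using cov by blast
      have "rad k \<le> 2*d"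
      proof (rule ccontr)
        assume "\<not> rad k \<le> 2*d"
        hence "k \<in> Fb" using k by (simp add: Fb_def)
        hence "cball (cen k) (rad k) \<inter> E \<inter> cball z d = {}" using z by (simp add: Ys_def)
        thus False using k p by blast
      qed
      hence "k \<in> Fz z" using k p by (auto simp: Fz_def)
      thus "p \<in> (\<Union>k\<in>Fz z. cball (cen k) (rad k))" using k by blast
    qed
    moreover have "finite (Fz z)" using Ffin by (simp add: Fz_def)
    moreover have "\<forall>k\<in>Fz z. rmin \<le> rad k \<and> rad k \<le> 2*(\<delta>*\<rho>)" using rads by (auto simp: Fz_def d_def)
    ultimately show ?thesis using IH zE unfolding Pc_def d_def by blast
  qed
  have Fz_disj: "disjoint_family_on Fz Y"
    unfolding disjoint_family_on_def
  proof (intro ballI impI)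
    fix z z' assume zz: "z \<in> Y" "z' \<in> Y" "z \<noteq> z'"
    show "Fz z \<inter> Fz z' = {}"
    proof (rule ccontr)
      assume "Fz z \<inter> Fz z' \<noteq> {}"
      then obtain k where k1: "k \<in> Fz z" and k2: "k \<in> Fz z'" by blast
      from k1 obtain p where p: "dist (cen k) p \<le> rad k" "dist z p \<le> d" "rad k \<le> 2*d" by (auto simp: Fz_def)
      from k2 obtain p' where p': "dist (cen k) p' \<le> rad k" "dist z' p' \<le> d" by (auto simp: Fz_def)
      have "dist z z' \<le> dist z p + dist p z'" by (rule dist_triangle)
      moreover have "dist p z' \<le> dist p (cen k) + dist (cen k) z'" by (rule dist_triangle)
      moreover have "dist (cen k) z' \<le> dist (cen k) p' + dist p' z'" by (rule dist_triangle)
      moreover have "dist p (cen k) = dist (cen k) p" "dist p' z' = dist z' p'" by (simp_all add: dist_commute)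
      ultimately have "dist z z' \<le> 6*d" using p p' by linarith
      moreover have "11*d \<le> dist z z'" using Y(3) zz unfolding sep_def by blast
      ultimately show False using d by linarith
    qed
  qed
  have sumS: "(\<Sum>z\<in>Ys. Ssum q (Fz z) cen rad) \<le> S"
  proof -
    have YsY: "Ys \<subseteq> Y" by (auto simp: Ys_def)
    have fin: "\<And>z. finite (Fz z)" using Ffin by (simp add: Fz_def)
    have "(\<Sum>z\<in>Ys. Ssum q (Fz z) cen rad) = Ssum q (\<Union>z\<in>Ys. Fz z) cen rad"
      unfolding Ssum_def
      by (rule sum.UNION_disjoint_family[symmetric]) (use Y(1) YsY fin Fz_disj in \<open>auto intro: finite_subset disjoint_family_on_mono\<close>)
    also have "\<dots> \<le> S" unfolding S_def Ssum_def
      by (rule sum_mono2[OF Ffin]) (use radpos in \<open>auto simp: Fz_def\<close>)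
    finally show ?thesis .
  qed
  have C0pos: "0 < C0" unfolding C0 using Kpos Dc0 by simp
  have small_tot: "(\<Sum>z\<in>Ys. measure M (cball z d)) \<le> S * d powr q / C0"
  proof -
    have "(\<Sum>z\<in>Ys. measure M (cball z d)) \<le> (\<Sum>z\<in>Ys. Ssum q (Fz z) cen rad * d powr q / C0)"
    proof (rule sum_mono)
      fix z assume z: "z \<in> Ys"
      have h: "C0 * d powr (-q) * measure M (cball z d) \<le> Ssum q (Fz z) cen rad" by (rule small[OF z])
      have "measure M (cball z d) = (C0 * d powr (-q) * measure M (cball z d)) * d powr q / C0"
        using C0pos d by (simp add: powr_minus field_simps)
      also have "\<dots> \<le> Ssum q (Fz z) cen rad * d powr q / C0"
        using h C0pos d by (intro divide_right_mono mult_right_mono) auto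
      finally show "measure M (cball z d) \<le> Ssum q (Fz z) cen rad * d powr q / C0" .
    qed
    also have "\<dots> = (\<Sum>z\<in>Ys. Ssum q (Fz z) cen rad) * d powr q / C0"
      by (simp add: sum_divide_distrib sum_distrib_right)
    also have "\<dots> \<le> S * d powr q / C0"
      using sumS C0pos by (intro divide_right_mono mult_right_mono) auto
    finally show ?thesis .
  qed
  have big_tot: "(\<Sum>z\<in>Yb. measure M (cball z d)) \<le> Dc * ((2 powr q) * \<rho> powr q) * S"
  proof -
    have YbY: "Yb \<subseteq> Y" by (auto simp: Yb_def)
    have Fbfin: "finite Fb" using Ffin by (simp add: Fb_def)
    have subb: "(\<Union>z\<in>Yb. cball z d) \<subseteq> (\<Union>k\<in>Fb. cball (cen k) (2 * rad k))"
    proof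
      fix u assume "u \<in> (\<Union>z\<in>Yb. cball z d)"
      then obtain z where z: "z \<in> Yb" "dist z u \<le> d" by auto
      then obtain k where k: "k \<in> Fb" "cball (cen k) (rad k) \<inter> E \<inter> cball z d \<noteq> {}"
        by (auto simp: Yb_def Ys_def)
      then obtain p where p: "dist (cen k) p \<le> rad k" "dist z p \<le> d" by auto
      have kr: "2*d < rad k" using k by (simp add: Fb_def)
      have "dist (cen k) u \<le> dist (cen k) p + dist p u" by (rule dist_triangle)
      moreover have "dist p u \<le> dist p z + dist z u" by (rule dist_triangle)
      moreover have "dist p z = dist z p" by (simp add: dist_commute)
      ultimately have "dist (cen k) u \<le> 2 * rad k" using p z kr by linarith
      thus "u \<in> (\<Union>k\<in>Fb. cball (cen k) (2 * rad k))" using k by auto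
    qed
    have "(\<Sum>z\<in>Yb. measure M (cball z d)) = measure M (\<Union>z\<in>Yb. cball z d)"
    proof (rule measure_finite_Union[symmetric])
      show "finite Yb" using Y(1) YbY by (rule finite_subset[rotated])
      show "disjoint_family_on (\<lambda>z. cball z d) Yb"
        using sep_disj[OF Y(3), of d] d YbY by (auto intro: disjoint_family_on_mono)
    qed (auto simp: emeasure_cball)
    also have "\<dots> \<le> measure M (\<Union>k\<in>Fb. cball (cen k) (2 * rad k))"
    proof (rule measure_mono_fmeasurable[OF subb])
      have "finite Yb" using Y(1) YbY by (rule finite_subset[rotated])
      hence "(\<Union>z\<in>Yb. cball ((\<lambda>z. z) z) ((\<lambda>_. d) z)) \<in> fmeasurable M" by (rule fin_UN_cball)
      thus "(\<Union>z\<in>Yb. cball z d) \<in> sets M" by (simp add: fmeasurableD)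
      show "(\<Union>k\<in>Fb. cball (cen k) (2 * rad k)) \<in> fmeasurable M" using Fbfin by (rule fin_UN_cball)
    qed
    also have "\<dots> \<le> (\<Sum>k\<in>Fb. measure M (cball (cen k) (2 * rad k)))"
      by (rule measure_UNION_le[OF Fbfin]) simp
    also have "\<dots> \<le> (\<Sum>k\<in>Fb. Dc * ((2 powr q) * \<rho> powr q) * (rad k powr (-q) * measure M (cball (cen k) (rad k))))"
    proof (rule sum_mono)
      fix k assume k: "k \<in> Fb"
      hence kF: "k \<in> F" by (simp add: Fb_def)
      have rk: "0 < rad k" "rad k \<le> 2*\<rho>" using radpos rads kF by auto
      have mk: "0 \<le> measure M (cball (cen k) (rad k))" by simp
      have "measure M (cball (cen k) (2 * rad k)) \<le> Dc * measure M (cball (cen k) (rad k))"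
        using Dc(2) rk by simp
      also have "\<dots> = Dc * (1 * measure M (cball (cen k) (rad k)))" by simp
      also have "\<dots> \<le> Dc * (((2*\<rho>) powr q * rad k powr (-q)) * measure M (cball (cen k) (rad k)))"
      proof -
        have "rad k powr q \<le> (2*\<rho>) powr q" using rk q by (intro powr_mono2) auto
        hence "1 \<le> (2*\<rho>) powr q * rad k powr (-q)" using rk by (simp add: powr_minus field_simps)
        thus ?thesis using Dc0 mk by (intro mult_left_mono mult_right_mono) auto
      qed
      also have "\<dots> = Dc * ((2 powr q) * \<rho> powr q) * (rad k powr (-q) * measure M (cball (cen k) (rad k)))"
        using \<rho> by (simp add: powr_mult)
      finally show "measure M (cball (cen k) (2 * rad k)) \<le> \<dots>" .
    qed
    also have "\<dots> = Dc * ((2 powr q) * \<rho> powr q) * Ssum q Fb cen rad"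
      by (simp add: Ssum_def sum_distrib_left)
    also have "\<dots> \<le> Dc * ((2 powr q) * \<rho> powr q) * S"
    proof -
      have "Ssum q Fb cen rad \<le> S" unfolding S_def Ssum_def
        by (rule sum_mono2[OF Ffin]) (use radpos in \<open>auto simp: Fb_def\<close>)
      thus ?thesis using Dc0 by (intro mult_left_mono) auto
    qed
    finally show ?thesis .
  qed
  have YY: "(\<Sum>z\<in>Y. measure M (cball z (12*d))) \<le> Dc^4 * ((\<Sum>z\<in>Ys. measure M (cball z d)) + (\<Sum>z\<in>Yb. measure M (cball z d)))"
  proof -
    have "(\<Sum>z\<in>Y. measure M (cball z (12*d))) \<le> (\<Sum>z\<in>Y. Dc^4 * measure M (cball z d))"
      by (rule sum_mono) (rule m12)
    also have "\<dots> = Dc^4 * (\<Sum>z\<in>Y. measure M (cball z d))" by (simp add: sum_distrib_left)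
    also have "(\<Sum>z\<in>Y. measure M (cball z d)) = (\<Sum>z\<in>Ys. measure M (cball z d)) + (\<Sum>z\<in>Yb. measure M (cball z d))"
    proof -
      have "Y = Ys \<union> Yb" "Ys \<inter> Yb = {}" by (auto simp: Ys_def Yb_def)
      moreover have "finite Ys" "finite Yb" using Y(1) by (auto simp: Ys_def Yb_def)
      ultimately show ?thesis by (metis sum.union_disjoint)
    qed
    finally show ?thesis by simp
  qed
  have dq: "d powr q = \<delta> powr q * \<rho> powr q" unfolding d_def using \<delta> \<rho> by (simp add: powr_mult)
  have fa: "C0*(1/\<rho> powr q)*measure M (cball y \<rho>) \<le> S"
  proof (rule final_arith[of K "Dc^5 * 2 powr q" "\<rho> powr q" S "Dc^4" "\<delta> powr q" Dc "2 powr q" C0])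
    show "0 < K" by (rule Kpos)
    show "0 < Dc^5 * 2 powr q" using Dc0 by simp
    show "0 < \<rho> powr q" using \<rho> by simp
    show "0 \<le> S" by (rule S0)
    show "0 \<le> Dc^4" using Dc0 by simp
    show "Dc^4 * \<delta> powr q \<le> K/2" by (rule \<alpha>)
    show "Dc^4 * Dc * 2 powr q = Dc^5 * 2 powr q" by (simp add: eval_nat_numeral)
    show "C0 = K / (2 * (Dc^5 * 2 powr q))" by (rule C0)
    show "K * measure M (cball y \<rho>) \<le> Dc^4 * ((\<Sum>z\<in>Ys. measure M (cball z d)) + (\<Sum>z\<in>Yb. measure M (cball z d)))"
      using I YY by linarith
    show "(\<Sum>z\<in>Ys. measure M (cball z d)) \<le> S * (\<delta> powr q * \<rho> powr q) / C0"
      using small_tot dq by simp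
    show "(\<Sum>z\<in>Yb. measure M (cball z d)) \<le> Dc * (2 powr q * \<rho> powr q) * S"
      by (rule big_tot)
  qed
  thus "C0 * \<rho> powr (-q) * measure M (cball y \<rho>) \<le> Ssum q F cen rad"
    unfolding S_def by (simp add: powr_minus divide_inverse)
qed

lemma core_ind:
  fixes E :: "'a set"
  assumes AS: "\<And>x r R. x\<in>E \<Longrightarrow> 0<r \<Longrightarrow> r<R \<Longrightarrow> ereal R < ediam E \<Longrightarrow>
        c*(r/R) powr s * measure M (cball x R) \<le> measure M (nbhd E r \<inter> cball x R)"
    and c: "0 < c" and q: "0 \<le> q" and \<delta>: "0 < \<delta>" "\<delta> \<le> 1/8"
    and K: "K = c*(4*\<delta>) powr s / Dc^2" and \<alpha>: "Dc^4 * \<delta> powr q \<le> K/2"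
    and C0: "C0 = K/(2*(Dc^5 * 2 powr q))" and rmin: "0 < rmin"
  shows "\<forall>\<rho>. 0 < \<rho> \<longrightarrow> ereal \<rho> < ediam E \<longrightarrow> 2*\<delta>^n*\<rho> < rmin \<longrightarrow> Pc q E C0 rmin \<rho>"
proof (induction n)
  case 0
  show ?case unfolding Pc_def
  proof (intro allI impI ballI)
    fix \<rho> y F cen rad
    assume \<rho>: "0 < \<rho>" "2*\<delta>^0*\<rho> < rmin" and y: "y \<in> E"
      and rads: "\<forall>k\<in>F. rmin \<le> rad k \<and> rad k \<le> 2*\<rho>" and cov: "E \<inter> cball y \<rho> \<subseteq> (\<Union>k\<in>F. cball (cen k) (rad k))"
    have "y \<in> E \<inter> cball y \<rho>" using y \<rho> by simp
    then obtain k where "k \<in> F" using cov by blast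
    with rads \<rho> have False by force
    thus "C0 * \<rho> powr - q * measure M (cball y \<rho>) \<le> Ssum q F cen rad" ..
  qed
next
  case (Suc n)
  show ?case
  proof (intro allI impI)
    fix \<rho> assume \<rho>: "0 < \<rho>" "ereal \<rho> < ediam E" "2*\<delta>^Suc n*\<rho> < rmin"
    have IH: "Pc q E C0 rmin (\<delta>*\<rho>)"
    proof -
      have "0 < \<delta>*\<rho>" using \<rho> \<delta> by simp
      moreover have "ereal (\<delta>*\<rho>) \<le> ereal \<rho>" using \<rho> \<delta> by simp
      hence "ereal (\<delta>*\<rho>) < ediam E" using \<rho>(2) by (rule order_le_less_trans)
      moreover have "2*\<delta>^n*(\<delta>*\<rho>) < rmin" using \<rho>(3) by (simp add: ac_simps)
      ultimately show ?thesis using Suc.IH by blast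
    qed
    show "Pc q E C0 rmin \<rho>" by (rule step[OF AS c q \<delta> K \<alpha> C0 rmin \<rho>(1,2) IH])
  qed
qed

lemma dir_a:
  fixes E :: "'a set"
  assumes E: "closed E" and s: "0 \<le> s" and c: "0 < c"
    and AR: "\<forall>x\<in>E. \<forall>r R. 0 < r \<and> r < R \<and> ereal R < ediam E \<longrightarrow>
        measure M (nbhd E r \<inter> cball x R) / measure M (cball x R) \<ge> c * (r / R) powr s"
    and sq: "s < q"
  shows "\<exists>C>0. \<forall>w\<in>E. \<forall>R. 0 < R \<and> ereal R < ediam E \<longrightarrow>
        ennreal (C * R powr (-q) * measure M (cball w R)) \<le> hcontent M q R (E \<inter> cball w R)"
proof -
  have q: "0 \<le> q" using s sq by simp
  have AS: "c*(r/R) powr s * measure M (cball x R) \<le> measure M (nbhd E r \<inter> cball x R)"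
    if "x\<in>E" "0<r" "r<R" "ereal R < ediam E" for x r R
  proof -
    have "c * (r / R) powr s \<le> measure M (nbhd E r \<inter> cball x R) / measure M (cball x R)"
      using AR that by blast
    moreover have "0 < measure M (cball x R)" using that by (intro mpos) auto
    ultimately show ?thesis by (simp add: pos_le_divide_eq)
  qed
  obtain \<delta> where \<delta>: "0 < \<delta>" "\<delta> \<le> 1/8" and \<alpha>': "Dc^4 * \<delta> powr q \<le> (c*(4*\<delta>) powr s / Dc^2)/2"
    using delta_ex[OF c sq Dc(1) s] by blast
  define K where "K = c*(4*\<delta>) powr s / Dc^2"
  define C0 where "C0 = K/(2*(Dc^5 * 2 powr q))"
  have \<alpha>: "Dc^4 * \<delta> powr q \<le> K/2" using \<alpha>' by (simp add: K_def)
  have Dc0: "0 < Dc" using Dc(1) by simp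
  have C0pos: "0 < C0" unfolding C0_def K_def using c \<delta> Dc0 by simp
  define C where "C = C0 * 2 powr q / Dc"
  have Cpos: "0 < C" unfolding C_def using C0pos Dc0 by simp
  show ?thesis
  proof (intro exI[of _ C] conjI Cpos ballI allI impI)
    fix w R assume w: "w \<in> E" and R: "0 < R \<and> ereal R < ediam E"
    show "ennreal (C * R powr (-q) * measure M (cball w R)) \<le> hcontent M q R (E \<inter> cball w R)"
      unfolding hcontent_def
    proof (rule Inf_greatest)
      fix u assume "u \<in> {(\<Sum>k. if k \<in> I then ennreal (r k powr (-q)) * emeasure M (cball (c k) (r k)) else 0)
        | (I::nat set) (c::nat \<Rightarrow> 'a) (r::nat \<Rightarrow> real).
        E \<inter> cball w R \<subseteq> (\<Union>k\<in>I. cball (c k) (r k)) \<and> (\<forall>k\<in>I. 0 < r k \<and> r k \<le> R)}"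
      then obtain I cen rad where u: "u = (\<Sum>k. if k \<in> I then ennreal (rad k powr (-q)) * emeasure M (cball (cen k) (rad k)) else 0)"
        and cov: "E \<inter> cball w R \<subseteq> (\<Union>k\<in>I. cball (cen k) (rad k))" and rads: "\<forall>k\<in>I. 0 < rad k \<and> rad k \<le> R"
        by blast
      define f where "f = (\<lambda>k. if k \<in> I then ennreal (rad k powr (-q)) * emeasure M (cball (cen k) (rad k)) else 0)"
      have cov2: "E \<inter> cball w R \<subseteq> (\<Union>k\<in>I. ball (cen k) (2 * rad k))"
      proof
        fix p assume "p \<in> E \<inter> cball w R"
        then obtain k where k: "k \<in> I" "dist (cen k) p \<le> rad k" using cov by auto
        hence "dist (cen k) p < 2 * rad k" using rads by force
        thus "p \<in> (\<Union>k\<in>I. ball (cen k) (2 * rad k))" using k by auto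
      qed
      obtain F where F: "F \<subseteq> I" "finite F" "E \<inter> cball w R \<subseteq> (\<Union>k\<in>F. ball (cen k) (2 * rad k))"
        using compactE_image[OF compact_part[OF E, of w R], of I "\<lambda>k. ball (cen k) (2 * rad k)"] cov2 by auto
      have "w \<in> E \<inter> cball w R" using w R by simp
      then obtain k0 where "k0 \<in> F" using F(3) by blast
      hence Fne: "F \<noteq> {}" by blast
      define rad' where "rad' = (\<lambda>k. 2 * rad k)"
      define rmin where "rmin = Min (rad' ` F)"
      have rmin: "0 < rmin" unfolding rmin_def using F Fne rads by (subst Min_gr_iff) (auto simp: rad'_def)
      have rmin_le: "\<forall>k\<in>F. rmin \<le> rad' k" unfolding rmin_def using F(2) by auto
      obtain n where n: "\<delta>^n < rmin/(2*R)" using real_arch_pow_inv[of "rmin/(2*R)" \<delta>] rmin R \<delta> by auto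
      have n': "2*\<delta>^n*R < rmin" using n R by (simp add: field_simps)
      have P: "Pc q E C0 rmin R"
        using core_ind[OF AS c q \<delta> K_def \<alpha> C0_def rmin, of n] R n' by blast
      have "C0 * R powr (-q) * measure M (cball w R) \<le> Ssum q F cen rad'"
      proof -
        have "\<forall>k\<in>F. rmin \<le> rad' k \<and> rad' k \<le> 2*R" using rmin_le rads F(1) by (auto simp: rad'_def)
        moreover have "E \<inter> cball w R \<subseteq> (\<Union>k\<in>F. cball (cen k) (rad' k))"
          using F(3) unfolding rad'_def by (auto dest!: subsetD)
        ultimately show ?thesis using P w F(2) unfolding Pc_def by blast
      qed
      also have "Ssum q F cen rad' \<le> (\<Sum>k\<in>F. 2 powr (-q) * Dc * (rad k powr (-q) * measure M (cball (cen k) (rad k))))"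
        unfolding Ssum_def
      proof (rule sum_mono)
        fix k assume k: "k \<in> F"
        hence rk: "0 < rad k" using rads F(1) by auto
        have "rad' k powr (-q) = 2 powr (-q) * rad k powr (-q)" unfolding rad'_def by (simp add: powr_mult)
        moreover have "measure M (cball (cen k) (rad' k)) \<le> Dc * measure M (cball (cen k) (rad k))"
          unfolding rad'_def using Dc(2) rk by simp
        moreover have nn: "0 \<le> 2 powr (-q) * rad k powr (-q)" by simp
        ultimately have "rad' k powr (-q) * measure M (cball (cen k) (rad' k)) \<le> (2 powr (-q) * rad k powr (-q)) * (Dc * measure M (cball (cen k) (rad k)))"
          by (simp only:) (rule mult_left_mono)
        thus "rad' k powr (-q) * measure M (cball (cen k) (rad' k)) \<le> 2 powr (-q) * Dc * (rad k powr (-q) * measure M (cball (cen k) (rad k)))"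
          by (simp add: ac_simps)
      qed
      also have "\<dots> = 2 powr (-q) * Dc * (\<Sum>k\<in>F. rad k powr (-q) * measure M (cball (cen k) (rad k)))"
        by (simp add: sum_distrib_left)
      finally have h: "C0 * R powr (-q) * measure M (cball w R) \<le> 2 powr (-q) * Dc * (\<Sum>k\<in>F. rad k powr (-q) * measure M (cball (cen k) (rad k)))" .
      have h2: "C * R powr (-q) * measure M (cball w R) \<le> (\<Sum>k\<in>F. rad k powr (-q) * measure M (cball (cen k) (rad k)))"
      proof -
        have "C * R powr (-q) * measure M (cball w R) = (2 powr q / Dc) * (C0 * R powr (-q) * measure M (cball w R))"
          unfolding C_def by simp
        also have "\<dots> \<le> (2 powr q / Dc) * (2 powr (-q) * Dc * (\<Sum>k\<in>F. rad k powr (-q) * measure M (cball (cen k) (rad k))))"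
          using h Dc0 by (intro mult_left_mono) auto
        also have "\<dots> = (\<Sum>k\<in>F. rad k powr (-q) * measure M (cball (cen k) (rad k)))"
          using Dc0 by (simp add: powr_minus field_simps)
        finally show ?thesis .
      qed
      have "ennreal (C * R powr (-q) * measure M (cball w R)) \<le> ennreal (\<Sum>k\<in>F. rad k powr (-q) * measure M (cball (cen k) (rad k)))"
        using h2 by (rule ennreal_leI)
      also have "\<dots> = (\<Sum>k\<in>F. ennreal (rad k powr (-q) * measure M (cball (cen k) (rad k))))"
        by (rule sum_ennreal[symmetric]) simp
      also have "\<dots> = (\<Sum>k\<in>F. f k)"
        using F(1) by (intro sum.cong) (auto simp: f_def emeasure_cball ennreal_mult)
      also have "\<dots> \<le> suminf f"
        by (rule sum_le_suminf[OF summableI F(2)]) simp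
      finally show "ennreal (C * R powr (-q) * measure M (cball w R)) \<le> u" unfolding u f_def .
    qed
  qed
qed

end

theorem corollary5p2:
  fixes M :: "'a::complete_space measure" and E :: "'a set"
  assumes "doubling_mm M"
    and "closed E"
  shows "upper_assouad_codim M E =
    Inf (ereal ` {q::real. 0 \<le> q \<and> (\<exists>C>0. \<forall>w\<in>E. \<forall>R. 0 < R \<and> ereal R < ediam E \<longrightarrow>
        ennreal (C * R powr (-q) * measure M (cball w R)) \<le> hcontent M q R (E \<inter> cball w R))})"
proof -
  interpret dmm M by unfold_locales (rule assms(1))
  define SA where "SA = {s::real. 0 \<le> s \<and>
     (\<exists>c>0. \<forall>x\<in>E. \<forall>r R. 0 < r \<and> r < R \<and> ereal R < ediam E \<longrightarrow>
        measure M (nbhd E r \<inter> cball x R) / measure M (cball x R) \<ge> c * (r / R) powr s)}"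
  define SB where "SB = {q::real. 0 \<le> q \<and> (\<exists>C>0. \<forall>w\<in>E. \<forall>R. 0 < R \<and> ereal R < ediam E \<longrightarrow>
        ennreal (C * R powr (-q) * measure M (cball w R)) \<le> hcontent M q R (E \<inter> cball w R))}"
  have BA: "SB \<subseteq> SA"
  proof
    fix q assume "q \<in> SB"
    then obtain C where q: "0 \<le> q" and C: "0 < C" and H: "\<forall>w\<in>E. \<forall>R. 0 < R \<and> ereal R < ediam E \<longrightarrow>
        ennreal (C * R powr (-q) * measure M (cball w R)) \<le> hcontent M q R (E \<inter> cball w R)"
      unfolding SB_def by blast
    show "q \<in> SA" unfolding SA_def using dir_b[OF q C H] q by blast
  qed
  have le1: "Inf (ereal ` SA) \<le> Inf (ereal ` SB)"
    using BA by (intro Inf_superset_mono) blast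
  have le2: "Inf (ereal ` SB) \<le> Inf (ereal ` SA)"
  proof (rule Inf_greatest)
    fix x assume "x \<in> ereal ` SA"
    then obtain s where x: "x = ereal s" and sA: "s \<in> SA" by blast
    then obtain c where s: "0 \<le> s" and c: "0 < c" and AR: "\<forall>x\<in>E. \<forall>r R. 0 < r \<and> r < R \<and> ereal R < ediam E \<longrightarrow>
        measure M (nbhd E r \<inter> cball x R) / measure M (cball x R) \<ge> c * (r / R) powr s"
      unfolding SA_def by blast
    show "Inf (ereal ` SB) \<le> x" unfolding x
    proof (rule dense_ge)
      fix y assume y: "ereal s < y"
      show "Inf (ereal ` SB) \<le> y"
      proof (cases y)
        case (real q)
        hence sq: "s < q" using y by simp
        have "q \<in> SB" unfolding SB_def using dir_a[OF assms(2) s c AR sq] s sq by simp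
        hence "Inf (ereal ` SB) \<le> ereal q" by (intro Inf_lower) blast
        thus ?thesis using real by simp
      next
        case PInf thus ?thesis by simp
      next
        case MInf thus ?thesis using y by simp
      qed
    qed
  qed
  show ?thesis
    unfolding upper_assouad_codim_def SA_def[symmetric] SB_def[symmetric]
    using le1 le2 by (rule antisym)
qed

end
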